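(* Let $R$ be a conformal superalgebra and let $0\to M\xrightarrow{d_1}N\xrightarrow{d_2}P\to0$ be an exact sequence of $R$-modules such that for every morphism $T:X\to Y$ in this sequence (including $0\to M$ and $P\to 0$), $Y/T(X)$ is a finitely generated torsion-free $\mathbb C[\partial]$-module. Then the dual sequence $0\to P^*\xrightarrow{d_2^*}N^*\xrightarrow{d_1^*}M^*\to0$ is exact.
   Context: A conformal superalgebra $R$ is a $\mathbb Z_2$-graded $\mathbb C[\partial]$-module with a $\mathbb C$-linear $\lambda$-bracket $R\otimes R\to\mathbb C[\lambda]\otimes R$ satisfying $[\partial a_\lambda b]=-\lambda[a_\lambda b]$, $[a_\lambda\partial b]=(\lambda+\partial)[a_\lambda b]$, $[a_\lambda b]=-(-1)^{p(a)p(b)}[b_{-\lambda-\partial}a]$ and $[a_\lambda[b_\mu c]]=[[a_\lambda b]_{\lambda+\mu}c]+(-1)^{p(a)p(b)}[b_\mu[a_\lambda c]]$. An $R$-module $M$ is a $\mathbb Z_2$-graded $\mathbb C[\partial]$-module with a $\lambda$-action $a_\lambda v=\sum_{n\ge0}\frac{\lambda^n}{n!}a_{(n)}v$ satisfying the usual axioms; a morphism $T:M\to N$ of $R$-modules is a linear map with $T(\partial m)=\partial T(m)$ and $T(a_\lambda m)=a_\lambda T(m)$. The conformal dual is $M^*=\{f_\lambda:M\to\mathbb C[\lambda]\mid f_\lambda(\partial m)=\lambda f_\lambda(m)\}$ with $(\partial f)_\lambda(m)=-\lambda f_\lambda(m)$ and $(a_\lambda f)_\mu(m)=-(-1)^{p(a)p(f)}f_{\mu-\lambda}(a_\lambda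 m)$. The dual morphism $T^*:N^*\to M^*$ is $[T^*(f)]_\lambda(m)=-f_\lambda(T(m))$. *)

theory Defs
  imports Main "HOL-Computational_Algebra.Polynomial"
begin

definition lin_map :: "(complex \<Rightarrow> 'a::ab_group_add \<Rightarrow> 'a) \<Rightarrow> (complex \<Rightarrow> 'b::ab_group_add \<Rightarrow> 'b)
    \<Rightarrow> ('a \<Rightarrow> 'b) \<Rightarrow> bool" where
  "lin_map s1 s2 f \<longleftrightarrow> (\<forall>x y. f (x + y) = f x + f y) \<and> (\<forall>c x. f (s1 c x) = s2 c (f x))"

definition lin_subspace :: "(complex \<Rightarrow> 'a::ab_group_add \<Rightarrow> 'a) \<Rightarrow> 'a set \<Rightarrow> bool" where
  "lin_subspace s S \<longleftrightarrow> 0 \<in> S \<and> (\<forall>x\<in>S. \<forall>y\<in>S. x + y \<in> S) \<and> (\<forall>c. \<forall>x\<in>S. s c x \<in> S)"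

definition cpd_module :: "(complex \<Rightarrow> 'a::ab_group_add \<Rightarrow> 'a) \<Rightarrow> ('a \<Rightarrow> 'a) \<Rightarrow> bool" where
  "cpd_module s D \<longleftrightarrow> vector_space s \<and> lin_map s s D"

definition poly_act :: "(complex \<Rightarrow> 'a::ab_group_add \<Rightarrow> 'a) \<Rightarrow> ('a \<Rightarrow> 'a) \<Rightarrow> complex poly \<Rightarrow> 'a \<Rightarrow> 'a" where
  "poly_act s D p x = (\<Sum>i\<le>degree p. s (coeff p i) ((D ^^ i) x))"

definition quot_fin_gen :: "(complex \<Rightarrow> 'a::ab_group_add \<Rightarrow> 'a) \<Rightarrow> ('a \<Rightarrow> 'a) \<Rightarrow> 'a set \<Rightarrow> bool" where
  "quot_fin_gen s D S \<longleftrightarrow>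
     (\<exists>G. finite G \<and> (\<forall>y. \<exists>p :: 'a \<Rightarrow> complex poly. y - (\<Sum>g\<in>G. poly_act s D (p g) g) \<in> S))"

definition quot_torsion_free :: "(complex \<Rightarrow> 'a::ab_group_add \<Rightarrow> 'a) \<Rightarrow> ('a \<Rightarrow> 'a) \<Rightarrow> 'a set \<Rightarrow> bool" where
  "quot_torsion_free s D S \<longleftrightarrow> (\<forall>p y. p \<noteq> 0 \<longrightarrow> poly_act s D p y \<in> S \<longrightarrow> y \<in> S)"

text \<open>G False = even part, G True = odd part; the space is the direct sum, and D preserves
the parts.\<close>
definition z2_graded :: "(complex \<Rightarrow> 'a::ab_group_add \<Rightarrow> 'a) \<Rightarrow> ('a \<Rightarrow> 'a) \<Rightarrow> (bool \<Rightarrow> 'a set) \<Rightarrow> bool" where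
  "z2_graded s D G \<longleftrightarrow> lin_subspace s (G False) \<and> lin_subspace s (G True)
     \<and> G False \<inter> G True = {0} \<and> (\<forall>x. \<exists>a\<in>G False. \<exists>b\<in>G True. x = a + b)
     \<and> (\<forall>i. D ` G i \<subseteq> G i)"

text \<open>(-1)^(p(a) p(b)) for parities given as booleans (True = odd).\<close>
definition psign :: "bool \<Rightarrow> bool \<Rightarrow> complex" where
  "psign i j = (if i \<and> j then -1 else 1)"

text \<open>The lambda-bracket [a_lambda b] = sum_n lambda^n/n! a_(n) b is encoded by the n-products
pr n a b; the axioms are the coefficientwise forms of the lambda-bracket axioms.\<close>
definition conformal_superalgebra ::
  "(complex \<Rightarrow> 'r::ab_group_add \<Rightarrow> 'r) \<Rightarrow> ('r \<Rightarrow> 'r) \<Rightarrow> (bool \<Rightarrow> 'r set) \<Rightarrow> (nat \<Rightarrow> 'r \<Rightarrow> 'r \<Rightarrow> 'r) \<Rightarrow> bool" where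
  "conformal_superalgebra s D G pr \<longleftrightarrow>
     cpd_module s D \<and> z2_graded s D G
     \<and> (\<forall>n b. lin_map s s (\<lambda>a. pr n a b)) \<and> (\<forall>n a. lin_map s s (pr n a))
     \<and> (\<forall>a b. \<exists>N. \<forall>n\<ge>N. pr n a b = 0)
     \<and> (\<forall>i j n a b. a \<in> G i \<longrightarrow> b \<in> G j \<longrightarrow> pr n a b \<in> G (i \<noteq> j))
     \<comment> \<open>[partial a_lambda b] = -lambda [a_lambda b]\<close>
     \<and> (\<forall>n a b. pr n (D a) b = - s (of_nat n) (pr (n - 1) a b))
     \<comment> \<open>[a_lambda partial b] = (lambda + partial) [a_lambda b]\<close>
     \<and> (\<forall>n a b. pr n a (D b) = D (pr n a b) + s (of_nat n) (pr (n - 1) a b))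
     \<comment> \<open>skew-symmetry [a_lambda b] = -(-1)^(p(a)p(b)) [b_(-lambda-partial) a]\<close>
     \<and> (\<forall>i j n a b K. a \<in> G i \<longrightarrow> b \<in> G j \<longrightarrow> (\<forall>m\<ge>n + K. pr m b a = 0) \<longrightarrow>
          pr n a b = - s (psign i j)
             (\<Sum>k<K. s ((-1) ^ (n + k) / of_nat (fact k)) ((D ^^ k) (pr (n + k) b a))))
     \<comment> \<open>Jacobi identity\<close>
     \<and> (\<forall>i j m n a b c. a \<in> G i \<longrightarrow> b \<in> G j \<longrightarrow>
          pr m a (pr n b c) = (\<Sum>k\<le>m. s (of_nat (m choose k)) (pr (m + n - k) (pr k a b) c))
                              + s (psign i j) (pr n b (pr m a c)))"

text \<open>The lambda-action a_lambda v = sum_n lambda^n/n! a_(n) v is encoded by act n a v.\<close>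
definition conformal_module ::
  "(complex \<Rightarrow> 'r::ab_group_add \<Rightarrow> 'r) \<Rightarrow> ('r \<Rightarrow> 'r) \<Rightarrow> (bool \<Rightarrow> 'r set) \<Rightarrow> (nat \<Rightarrow> 'r \<Rightarrow> 'r \<Rightarrow> 'r)
   \<Rightarrow> (complex \<Rightarrow> 'm::ab_group_add \<Rightarrow> 'm) \<Rightarrow> ('m \<Rightarrow> 'm) \<Rightarrow> (bool \<Rightarrow> 'm set) \<Rightarrow> (nat \<Rightarrow> 'r \<Rightarrow> 'm \<Rightarrow> 'm) \<Rightarrow> bool" where
  "conformal_module sR DR GR pr s D G act \<longleftrightarrow>
     cpd_module s D \<and> z2_graded s D G
     \<and> (\<forall>n v. lin_map sR s (\<lambda>a. act n a v)) \<and> (\<forall>n a. lin_map s s (act n a))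
     \<and> (\<forall>a v. \<exists>N. \<forall>n\<ge>N. act n a v = 0)
     \<and> (\<forall>i j n a v. a \<in> GR i \<longrightarrow> v \<in> G j \<longrightarrow> act n a v \<in> G (i \<noteq> j))
     \<comment> \<open>(partial a)_lambda v = -lambda a_lambda v\<close>
     \<and> (\<forall>n a v. act n (DR a) v = - s (of_nat n) (act (n - 1) a v))
     \<comment> \<open>a_lambda (partial v) = (lambda + partial) a_lambda v\<close>
     \<and> (\<forall>n a v. act n a (D v) = D (act n a v) + s (of_nat n) (act (n - 1) a v))
     \<comment> \<open>a_lambda (b_mu v) - (-1)^(p(a)p(b)) b_mu (a_lambda v) = [a_lambda b]_(lambda+mu) v\<close>
     \<and> (\<forall>i j m n a b v. a \<in> GR i \<longrightarrow> b \<in> GR j \<longrightarrow>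
          act m a (act n b v) - s (psign i j) (act n b (act m a v))
            = (\<Sum>k\<le>m. s (of_nat (m choose k)) (act (m + n - k) (pr k a b) v)))"

definition module_morphism ::
  "(complex \<Rightarrow> 'm::ab_group_add \<Rightarrow> 'm) \<Rightarrow> ('m \<Rightarrow> 'm) \<Rightarrow> (nat \<Rightarrow> 'r \<Rightarrow> 'm \<Rightarrow> 'm)
   \<Rightarrow> (complex \<Rightarrow> 'n::ab_group_add \<Rightarrow> 'n) \<Rightarrow> ('n \<Rightarrow> 'n) \<Rightarrow> (nat \<Rightarrow> 'r \<Rightarrow> 'n \<Rightarrow> 'n)
   \<Rightarrow> ('m \<Rightarrow> 'n) \<Rightarrow> bool" where
  "module_morphism sM DM actM sN DN actN T \<longleftrightarrow>
     lin_map sM sN T \<and> (\<forall>m. T (DM m) = DN (T m)) \<and> (\<forall>n a m. T (actM n a m) = actN n a (T m))"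

definition conformal_dual :: "(complex \<Rightarrow> 'm::ab_group_add \<Rightarrow> 'm) \<Rightarrow> ('m \<Rightarrow> 'm) \<Rightarrow> ('m \<Rightarrow> complex poly) set" where
  "conformal_dual s D = {f. lin_map s smult f \<and> (\<forall>m. f (D m) = [:0, 1:] * f m)}"

definition dual_morphism :: "('m \<Rightarrow> 'n) \<Rightarrow> ('n \<Rightarrow> complex poly) \<Rightarrow> ('m \<Rightarrow> complex poly)" where
  "dual_morphism T f = (\<lambda>m. - f (T m))"

end

theory Submission
  imports Defs
begin


locale cpdm = vector_space s for s :: "complex \<Rightarrow> 'a::ab_group_add \<Rightarrow> 'a" +
  fixes D :: "'a \<Rightarrow> 'a"
  assumes linD: "lin_map s s D"
begin

abbreviation pa where "pa \<equiv> poly_act s D"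

lemma D_add: "D (x + y) = D x + D y" using linD by (simp add: lin_map_def)
lemma D_scale: "D (s c x) = s c (D x)" using linD by (simp add: lin_map_def)
lemma D_0: "D 0 = 0" using D_add[of 0 0] by simp
lemma D_minus: "D (- x) = - D x"
proof -
  have "D x + D (- x) = 0" using D_add[of x "-x"] D_0 by simp
  from minus_unique[OF this] show ?thesis by simp
qed
lemma D_diff: "D (x - y) = D x - D y" by (simp only: diff_conv_add_uminus D_add D_minus)
lemma D_sum: "D (sum f A) = (\<Sum>i\<in>A. D (f i))"
  by (induct A rule: infinite_finite_induct) (auto simp: D_0 D_add)

lemma pa_ext: assumes "degree p < K" shows "pa p x = (\<Sum>i<K. s (coeff p i) ((D ^^ i) x))"
proof -
  have "pa p x = (\<Sum>i\<in>{..degree p}. s (coeff p i) ((D ^^ i) x))" by (simp add: poly_act_def)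
  also have "\<dots> = (\<Sum>i<K. s (coeff p i) ((D ^^ i) x))"
    by (rule sum.mono_neutral_left) (use assms in \<open>auto simp: coeff_eq_0\<close>)
  finally show ?thesis .
qed

lemma pa_pCons: "pa (pCons a p) x = s a x + D (pa p x)"
proof -
  let ?K = "Suc (degree p)"
  have "pa (pCons a p) x = (\<Sum>i<Suc ?K. s (coeff (pCons a p) i) ((D ^^ i) x))"
    by (rule pa_ext) (meson degree_pCons_le le_imp_less_Suc)
  also have "\<dots> = s a x + (\<Sum>i<?K. s (coeff p i) ((D ^^ Suc i) x))"
    by (subst sum.lessThan_Suc_shift) simp
  also have "(\<Sum>i<?K. s (coeff p i) ((D ^^ Suc i) x)) = D (pa p x)"
    by (simp only: pa_ext[of p ?K x, OF lessI] D_sum D_scale funpow.simps comp_apply)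
  finally show ?thesis .
qed

lemma pa_0 [simp]: "pa 0 x = 0" by (simp add: poly_act_def)
lemma pa_one [simp]: "pa 1 x = x" by (simp add: poly_act_def)

lemma pa_add_vec: "pa p (x + y) = pa p x + pa p y"
  by (induct p) (simp_all add: pa_pCons D_add scale_right_distrib add_ac)
lemma pa_zero_vec [simp]: "pa p 0 = 0"
  by (induct p) (simp_all add: pa_pCons D_0)
lemma pa_neg_vec: "pa p (- x) = - pa p x"
proof -
  have "pa p x + pa p (- x) = 0" using pa_add_vec[of p x "-x"] by simp
  from minus_unique[OF this] show ?thesis by simp
qed
lemma pa_diff_vec: "pa p (x - y) = pa p x - pa p y"
  by (simp only: diff_conv_add_uminus pa_add_vec pa_neg_vec)
lemma pa_scale_vec: "pa p (s c x) = s c (pa p x)"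
  by (induct p) (simp_all add: pa_pCons D_scale scale_right_distrib mult.commute)
lemma pa_sum_vec: "pa p (sum f A) = (\<Sum>i\<in>A. pa p (f i))"
  by (induct A rule: infinite_finite_induct) (auto simp: pa_add_vec)

lemma pa_add: "pa (p + q) x = pa p x + pa q x"
proof (induct p arbitrary: q)
  case 0 then show ?case by simp
next
  case (pCons a p)
  obtain b q' where q: "q = pCons b q'" by (cases q)
  have "pa (p + q') x = pa p x + pa q' x" by (rule pCons.hyps)
  then show ?case using q
    by (simp add: pa_pCons D_add scale_left_distrib add_ac)
qed
lemma pa_smult: "pa (smult c p) x = s c (pa p x)"
  by (induct p) (simp_all add: pa_pCons D_scale scale_right_distrib)
lemma pa_mult: "pa (p * q) x = pa p (pa q x)"
  by (induct p) (simp_all add: pa_pCons pa_add pa_smult)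
lemma pa_minus: "pa (- p) x = - pa p x"
proof -
  have "pa p x + pa (- p) x = 0" using pa_add[of p "-p" x] by simp
  from minus_unique[OF this] show ?thesis by simp
qed
lemma pa_diff: "pa (p - q) x = pa p x - pa q x"
  by (simp only: diff_conv_add_uminus pa_add pa_minus)
lemma pa_X: "pa [:0, 1:] x = D x"
  by (simp add: pa_pCons D_0)

end

lemma diff_helper: "(T::'a::ab_group_add) = P + B \<Longrightarrow> y - B = (y - T) + P"
  by (simp add: algebra_simps)

lemma sum_remove2:
  assumes "finite I" "i \<in> I" "j \<in> I" "i \<noteq> j"
  shows "sum f I = f i + f j + sum f (I - {i} - {j})"
proof -
  have "sum f I = f i + sum f (I - {i})" using assms by (simp add: sum.remove)
  also have "sum f (I - {i}) = f j + sum f (I - {i} - {j})"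
    using assms by (simp add: sum.remove)
  finally show ?thesis by (simp add: add_ac)
qed

lemma sum_upd2:
  assumes "i \<noteq> j"
  shows "(\<Sum>l\<in>I - {i} - {j}. F ((p(i := v)) l) ((b(j := w)) l)) = (\<Sum>l\<in>I - {i} - {j}. F (p l) (b l))"
  by (rule sum.cong) auto

locale cpdS = cpdm s D for s :: "complex \<Rightarrow> 'a::ab_group_add \<Rightarrow> 'a" and D +
  fixes S :: "'a set"
  assumes S0: "0 \<in> S" and Sadd: "x \<in> S \<Longrightarrow> y \<in> S \<Longrightarrow> x + y \<in> S"
    and Sscale: "x \<in> S \<Longrightarrow> s c x \<in> S" and SD: "x \<in> S \<Longrightarrow> D x \<in> S"
    and Stf: "p \<noteq> 0 \<Longrightarrow> pa p y \<in> S \<Longrightarrow> y \<in> S"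
begin

lemma Sneg: "x \<in> S \<Longrightarrow> - x \<in> S"
  using Sscale[of x "-1"] by simp
lemma Sdiff: "x \<in> S \<Longrightarrow> y \<in> S \<Longrightarrow> x - y \<in> S"
  unfolding diff_conv_add_uminus by (intro Sadd Sneg)
lemma Ssum: "(\<And>i. i \<in> A \<Longrightarrow> f i \<in> S) \<Longrightarrow> sum f A \<in> S"
proof (induct A rule: infinite_finite_induct)
  case (infinite A) then show ?case using S0 by simp
next
  case empty then show ?case using S0 by simp
next
  case (insert a F) then show ?case using Sadd by simp
qed
lemma S_pa: "x \<in> S \<Longrightarrow> pa p x \<in> S"
proof (induct p)
  case 0 then show ?case using S0 by simp
next
  case (pCons a p) then show ?case unfolding pa_pCons by (intro Sadd Sscale SD) 
qed

definition gen :: "'i set \<Rightarrow> ('i \<Rightarrow> 'a) \<Rightarrow> bool" where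
  "gen I b \<longleftrightarrow> (\<forall>y. \<exists>p. y - (\<Sum>i\<in>I. pa (p i) (b i)) \<in> S)"
definition indep :: "'i set \<Rightarrow> ('i \<Rightarrow> 'a) \<Rightarrow> bool" where
  "indep I b \<longleftrightarrow> (\<forall>p. (\<Sum>i\<in>I. pa (p i) (b i)) \<in> S \<longrightarrow> (\<forall>i\<in>I. p i = 0))"

definition mu :: "'i set \<Rightarrow> ('i \<Rightarrow> complex poly) \<Rightarrow> nat" where
  "mu I c = (\<Sum>i\<in>I. if c i = 0 then 0 else Suc (degree (c i)))"

lemma L_key: "pa (x - y * q) bi + pa y (bj + pa q bi) = pa x bi + pa y bj"
  by (simp add: pa_diff pa_mult pa_add_vec)

lemma step_sum:
  assumes fin: "finite I" and iI: "i \<in> I" and jI: "j \<in> I" and ij: "i \<noteq> j"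
    and key: "pa u (b i) + pa (p j) (b j + w) = pa (p i) (b i) + pa (p j) (b j)"
  shows "(\<Sum>l\<in>I. pa ((p(i := u)) l) ((b(j := b j + w)) l)) = (\<Sum>l\<in>I. pa (p l) (b l))"
proof -
  have "(\<Sum>l\<in>I. pa ((p(i := u)) l) ((b(j := b j + w)) l))
      = pa ((p(i := u)) i) ((b(j := b j + w)) i) + pa ((p(i := u)) j) ((b(j := b j + w)) j)
        + (\<Sum>l\<in>I - {i} - {j}. pa ((p(i := u)) l) ((b(j := b j + w)) l))"
    by (rule sum_remove2[OF fin iI jI ij])
  also have "(\<Sum>l\<in>I - {i} - {j}. pa ((p(i := u)) l) ((b(j := b j + w)) l)) = (\<Sum>l\<in>I - {i} - {j}. pa (p l) (b l))"
    by (rule sum_upd2[OF ij, where F="pa"])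
  also have "pa ((p(i := u)) i) ((b(j := b j + w)) i) = pa u (b i)"
    using ij by simp
  also have "pa ((p(i := u)) j) ((b(j := b j + w)) j) = pa (p j) (b j + w)"
    using ij by simp
  also note key
  also have "pa (p i) (b i) + pa (p j) (b j) + (\<Sum>l\<in>I - {i} - {j}. pa (p l) (b l)) = (\<Sum>l\<in>I. pa (p l) (b l))"
    by (rule sum_remove2[OF fin iI jI ij, symmetric])
  finally show ?thesis .
qed

lemma step_gen:
  assumes fin: "finite I" and iI: "i \<in> I" and jI: "j \<in> I" and ij: "i \<noteq> j" and g: "gen I b"
  shows "gen I (b(j := b j + pa q (b i)))"
  unfolding gen_def
proof
  fix y
  obtain p where p: "y - (\<Sum>l\<in>I. pa (p l) (b l)) \<in> S" using g unfolding gen_def by blast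
  have "(\<Sum>l\<in>I. pa ((p(i := p i - p j * q)) l) ((b(j := b j + pa q (b i))) l)) = (\<Sum>l\<in>I. pa (p l) (b l))"
    by (rule step_sum[OF fin iI jI ij L_key])
  with p have "y - (\<Sum>l\<in>I. pa ((p(i := p i - p j * q)) l) ((b(j := b j + pa q (b i))) l)) \<in> S" by simp
  then show "\<exists>p'. y - (\<Sum>l\<in>I. pa (p' l) ((b(j := b j + pa q (b i))) l)) \<in> S" by (rule exI[where x="p(i := p i - p j * q)"])
qed

lemma step_rel:
  assumes fin: "finite I" and iI: "i \<in> I" and jI: "j \<in> I" and ij: "i \<noteq> j"
  shows "(\<Sum>l\<in>I. pa ((c(i := c i mod c j)) l) ((b(j := b j + pa (c i div c j) (b i))) l)) = (\<Sum>l\<in>I. pa (c l) (b l))"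
proof (rule step_sum[OF fin iI jI ij])
  have "pa (c i) (b i) = pa (c j * (c i div c j) + c i mod c j) (b i)"
    by (simp only: mult_div_mod_eq)
  also have "\<dots> = pa (c j) (pa (c i div c j) (b i)) + pa (c i mod c j) (b i)"
    by (simp only: pa_add pa_mult)
  finally have e: "pa (c i) (b i) = pa (c j) (pa (c i div c j) (b i)) + pa (c i mod c j) (b i)" .
  show "pa (c i mod c j) (b i) + pa (c j) (b j + pa (c i div c j) (b i)) = pa (c i) (b i) + pa (c j) (b j)"
    unfolding e pa_add_vec by (simp only: add_ac)
qed

lemma step_mu:
  assumes fin: "finite I" and iI: "i \<in> I" and jI: "j \<in> I" and cj: "c j \<noteq> 0" and ci: "c i \<noteq> 0"
    and deg: "degree (c j) \<le> degree (c i)"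
  shows "mu I (c(i := c i mod c j)) < mu I c"
proof -
  let ?w = "\<lambda>c l. if c l = 0 then 0 else Suc (degree (c l))"
  have e1: "mu I c' = ?w c' i + (\<Sum>l\<in>I - {i}. ?w c' l)" for c'
    unfolding mu_def by (rule sum.remove[OF fin iI])
  have e2: "(\<Sum>l\<in>I - {i}. ?w (c(i := c i mod c j)) l) = (\<Sum>l\<in>I - {i}. ?w c l)"
    by (rule sum.cong) auto
  have "c i mod c j = 0 \<or> degree (c i mod c j) < degree (c j)" using cj degree_mod_less by blast
  then have "?w (c(i := c i mod c j)) i < ?w c i" using ci deg by auto
  then show ?thesis unfolding e1[of c] e1[of "c(i := c i mod c j)"] e2 by simp
qed

lemma reduce_aux:
  assumes fin: "finite I"
  shows "mu I c = n \<Longrightarrow> gen I b \<Longrightarrow> (\<Sum>i\<in>I. pa (c i) (b i)) \<in> S \<Longrightarrow> i0 \<in> I \<Longrightarrow> c i0 \<noteq> 0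
     \<Longrightarrow> \<exists>j\<in>I. \<exists>b'. gen (I - {j}) b'"
proof (induction n arbitrary: b c i0 rule: less_induct)
  case (less n)
  obtain j where j: "j \<in> I \<and> c j \<noteq> 0" and jmin: "\<forall>i. i \<in> I \<and> c i \<noteq> 0 \<longrightarrow> degree (c j) \<le> degree (c i)"
    using ex_has_least_nat[of "\<lambda>i. i \<in> I \<and> c i \<noteq> 0" i0 "\<lambda>i. degree (c i)"] less.prems by blast
  show ?case
  proof (cases "\<exists>i\<in>I. i \<noteq> j \<and> c i \<noteq> 0")
    case False
    have "(\<Sum>i\<in>I. pa (c i) (b i)) = pa (c j) (b j) + (\<Sum>i\<in>I - {j}. pa (c i) (b i))"
      by (rule sum.remove[OF fin j[THEN conjunct1]])
    also have "(\<Sum>i\<in>I - {j}. pa (c i) (b i)) = 0"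
      using False by (intro sum.neutral) auto
    finally have "pa (c j) (b j) \<in> S" using less.prems by simp
    then have bj: "b j \<in> S" using Stf j by blast
    have "gen (I - {j}) b"
      unfolding gen_def
    proof
      fix y
      obtain p where p: "y - (\<Sum>i\<in>I. pa (p i) (b i)) \<in> S" using less.prems unfolding gen_def by blast
      have "(\<Sum>i\<in>I. pa (p i) (b i)) = pa (p j) (b j) + (\<Sum>i\<in>I - {j}. pa (p i) (b i))"
        by (rule sum.remove[OF fin j[THEN conjunct1]])
      then have "y - (\<Sum>i\<in>I - {j}. pa (p i) (b i)) = (y - (\<Sum>i\<in>I. pa (p i) (b i))) + pa (p j) (b j)"
        by (rule diff_helper)
      also have "\<dots> \<in> S" by (intro Sadd p S_pa bj)
      finally show "\<exists>p. y - (\<Sum>i\<in>I - {j}. pa (p i) (b i)) \<in> S" by (rule exI[where x=p])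
    qed
    then show ?thesis using j by blast
  next
    case True
    then obtain i where i: "i \<in> I" "i \<noteq> j" "c i \<noteq> 0" by blast
    have deg: "degree (c j) \<le> degree (c i)" using jmin i by blast
    have gen': "gen I (b(j := b j + pa (c i div c j) (b i)))"
      by (rule step_gen[OF fin i(1) j[THEN conjunct1] i(2) less.prems(2)])
    have rel': "(\<Sum>l\<in>I. pa ((c(i := c i mod c j)) l) ((b(j := b j + pa (c i div c j) (b i))) l)) \<in> S"
      unfolding step_rel[OF fin i(1) j[THEN conjunct1] i(2)] by (rule less.prems(3))
    have cj': "(c(i := c i mod c j)) j \<noteq> 0" using j i(2) by simp
    have mlt: "mu I (c(i := c i mod c j)) < n"
      using step_mu[OF fin i(1) j[THEN conjunct1] _ i(3) deg] j less.prems(1) by simp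
    show ?thesis by (rule less.IH[OF mlt refl gen' rel' j[THEN conjunct1] cj'])
  qed
qed

lemma basis_exists:
  "finite I \<Longrightarrow> card I = n \<Longrightarrow> gen I (b :: 'i \<Rightarrow> 'a) \<Longrightarrow> \<exists>J b'. finite J \<and> gen J (b' :: 'i \<Rightarrow> 'a) \<and> indep J b'"
proof (induction n arbitrary: I b rule: less_induct)
  case (less n)
  show ?case
  proof (cases "indep I b")
    case True then show ?thesis using less.prems by blast
  next
    case False
    then obtain p i0 where p: "(\<Sum>i\<in>I. pa (p i) (b i)) \<in> S" "i0 \<in> I" "p i0 \<noteq> 0"
      unfolding indep_def by blast
    obtain j b' where j: "j \<in> I" "gen (I - {j}) b'"
      using reduce_aux[OF less.prems(1) refl less.prems(3) p] by blast
    have "card (I - {j}) < n" using card_Diff1_less[OF less.prems(1) j(1)] less.prems(2) by simp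
    then show ?thesis using less.IH[OF _ _ refl j(2)] less.prems(1) by blast
  qed
qed

lemma extend:
  assumes g: "gen J b" and ind: "indep J b"
    and phi_add: "\<And>x y. x \<in> S \<Longrightarrow> y \<in> S \<Longrightarrow> \<phi> (x + y) = \<phi> x + \<phi> y"
    and phi_scale: "\<And>c x. x \<in> S \<Longrightarrow> \<phi> (s c x) = smult c (\<phi> x)"
    and phi_D: "\<And>x. x \<in> S \<Longrightarrow> \<phi> (D x) = [:0, 1:] * \<phi> x"
  shows "\<exists>\<psi>. lin_map s smult \<psi> \<and> (\<forall>x. \<psi> (D x) = [:0, 1:] * \<psi> x) \<and> (\<forall>x\<in>S. \<psi> x = \<phi> x)"
proof -
  define P where "P y = (SOME p. y - (\<Sum>i\<in>J. pa (p i) (b i)) \<in> S)" for y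
  define R where "R y = y - (\<Sum>i\<in>J. pa (P y i) (b i))" for y
  have RS: "R y \<in> S" for y
  proof -
    have "\<exists>p. y - (\<Sum>i\<in>J. pa (p i) (b i)) \<in> S" using g unfolding gen_def by blast
    then show ?thesis unfolding R_def P_def by (rule someI_ex)
  qed
  have Runiq: "R y = y - (\<Sum>i\<in>J. pa (p i) (b i))" if h: "y - (\<Sum>i\<in>J. pa (p i) (b i)) \<in> S" for y p
  proof -
    have "(y - (\<Sum>i\<in>J. pa (p i) (b i))) - R y \<in> S" by (rule Sdiff[OF h RS])
    moreover have "(y - (\<Sum>i\<in>J. pa (p i) (b i))) - R y = (\<Sum>i\<in>J. pa (P y i - p i) (b i))"
      unfolding R_def pa_diff sum_subtractf by (simp add: algebra_simps)
    ultimately have "\<forall>i\<in>J. P y i - p i = 0" using ind unfolding indep_def by metis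
    then have "(\<Sum>i\<in>J. pa (P y i) (b i)) = (\<Sum>i\<in>J. pa (p i) (b i))" by (intro sum.cong) auto
    then show ?thesis unfolding R_def by simp
  qed
  define \<psi> where "\<psi> y = \<phi> (R y)" for y
  have Radd: "R (x + y) = R x + R y" for x y
  proof -
    have "(x + y) - (\<Sum>i\<in>J. pa (P x i + P y i) (b i)) = R x + R y"
      unfolding R_def pa_add sum.distrib by (simp add: algebra_simps)
    then show ?thesis using Runiq[of "x + y" "\<lambda>i. P x i + P y i"] Sadd[OF RS RS] by simp
  qed
  have Rscale: "R (s c x) = s c (R x)" for c x
  proof -
    have "s c x - (\<Sum>i\<in>J. pa (smult c (P x i)) (b i)) = s c (R x)"
      unfolding R_def pa_smult scale_sum_right[symmetric] scale_right_diff_distrib ..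
    then show ?thesis using Runiq[of "s c x" "\<lambda>i. smult c (P x i)"] Sscale[OF RS] by simp
  qed
  have RD: "R (D x) = D (R x)" for x
  proof -
    have "D x - (\<Sum>i\<in>J. pa ([:0, 1:] * P x i) (b i)) = D (R x)"
      unfolding R_def pa_mult pa_X D_diff D_sum ..
    then show ?thesis using Runiq[of "D x" "\<lambda>i. [:0, 1:] * P x i"] SD[OF RS] by simp
  qed
  have RSid: "R x = x" if "x \<in> S" for x
    using Runiq[of x "\<lambda>i. 0"] that by simp
  have "lin_map s smult \<psi>"
    unfolding lin_map_def \<psi>_def Radd Rscale using phi_add phi_scale RS by simp
  moreover have "\<forall>x. \<psi> (D x) = [:0, 1:] * \<psi> x"
    unfolding \<psi>_def RD using phi_D RS by simp
  moreover have "\<forall>x\<in>S. \<psi> x = \<phi> x"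
    unfolding \<psi>_def using RSid by simp
  ultimately show ?thesis by blast
qed

end

theorem proposition2p19:
  fixes sR :: "complex \<Rightarrow> 'r::ab_group_add \<Rightarrow> 'r" and DR :: "'r \<Rightarrow> 'r"
    and GR :: "bool \<Rightarrow> 'r set" and pr :: "nat \<Rightarrow> 'r \<Rightarrow> 'r \<Rightarrow> 'r"
    and sM :: "complex \<Rightarrow> 'm::ab_group_add \<Rightarrow> 'm" and DM :: "'m \<Rightarrow> 'm"
    and GM :: "bool \<Rightarrow> 'm set" and actM :: "nat \<Rightarrow> 'r \<Rightarrow> 'm \<Rightarrow> 'm"
    and sN :: "complex \<Rightarrow> 'n::ab_group_add \<Rightarrow> 'n" and DN :: "'n \<Rightarrow> 'n"
    and GN :: "bool \<Rightarrow> 'n set" and actN :: "nat \<Rightarrow> 'r \<Rightarrow> 'n \<Rightarrow> 'n"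
    and sP :: "complex \<Rightarrow> 'p::ab_group_add \<Rightarrow> 'p" and DP :: "'p \<Rightarrow> 'p"
    and GP :: "bool \<Rightarrow> 'p set" and actP :: "nat \<Rightarrow> 'r \<Rightarrow> 'p \<Rightarrow> 'p"
    and d1 :: "'m \<Rightarrow> 'n" and d2 :: "'n \<Rightarrow> 'p"
  assumes R: "conformal_superalgebra sR DR GR pr"
    and M: "conformal_module sR DR GR pr sM DM GM actM"
    and N: "conformal_module sR DR GR pr sN DN GN actN"
    and P: "conformal_module sR DR GR pr sP DP GP actP"
    and d1: "module_morphism sM DM actM sN DN actN d1"
    and d2: "module_morphism sN DN actN sP DP actP d2"
    and exact_M: "inj d1"
    and exact_N: "range d1 = {n. d2 n = 0}"
    and exact_P: "surj d2"
    and coker0: "quot_fin_gen sM DM {0} \<and> quot_torsion_free sM DM {0}"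
    and coker1: "quot_fin_gen sN DN (range d1) \<and> quot_torsion_free sN DN (range d1)"
    and coker2: "quot_fin_gen sP DP (range d2) \<and> quot_torsion_free sP DP (range d2)"
  shows "inj_on (dual_morphism d2) (conformal_dual sP DP)
    \<and> dual_morphism d2 ` conformal_dual sP DP \<subseteq> conformal_dual sN DN
    \<and> {g \<in> conformal_dual sN DN. dual_morphism d1 g = (\<lambda>_. 0)} = dual_morphism d2 ` conformal_dual sP DP
    \<and> dual_morphism d1 ` conformal_dual sN DN = conformal_dual sM DM"
proof -
  have addsub: "f (x - y) = f x - f y" if "\<forall>x y. f (x + y) = f x + f y" for f :: "'u::ab_group_add \<Rightarrow> 'v::ab_group_add" and x y
  proof -
    have "f x = f (x - y) + f y" using that by (metis diff_add_cancel)
    then show ?thesis by (simp add: algebra_simps)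
  qed
  have add0: "f 0 = 0" if "\<forall>x y. f (x + y) = f x + f y" for f :: "'u::ab_group_add \<Rightarrow> 'v::ab_group_add"
    using addsub[OF that, of 0 0] by simp
  from d1 have d1add: "\<And>x y. d1 (x + y) = d1 x + d1 y" and d1scale: "\<And>c x. d1 (sM c x) = sN c (d1 x)"
    and d1D: "\<And>x. d1 (DM x) = DN (d1 x)"
    unfolding module_morphism_def lin_map_def by auto
  from d2 have d2add: "\<And>x y. d2 (x + y) = d2 x + d2 y" and d2scale: "\<And>c x. d2 (sN c x) = sP c (d2 x)"
    and d2D: "\<And>x. d2 (DN x) = DP (d2 x)"
    unfolding module_morphism_def lin_map_def by auto
  have d10: "d1 0 = 0" using add0[of d1] d1add by blast
  have d2d1: "d2 (d1 m) = 0" for m using exact_N by blast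
  have cN: "cpd_module sN DN" using N unfolding conformal_module_def by blast
  interpret NN: cpdm sN DN using cN unfolding cpd_module_def cpdm_def cpdm_axioms_def by blast
  have dual2: "dual_morphism d2 f \<in> conformal_dual sN DN" if f: "f \<in> conformal_dual sP DP" for f
  proof -
    have fadd: "\<And>x y. f (x + y) = f x + f y" and fsc: "\<And>c x. f (sP c x) = smult c (f x)"
      and fD: "\<And>x. f (DP x) = [:0, 1:] * f x"
      using f unfolding conformal_dual_def lin_map_def by auto
    show ?thesis unfolding conformal_dual_def dual_morphism_def lin_map_def
      by (simp add: d2add d2scale d2D fadd fsc fD)
  qed
  have dual1: "dual_morphism d1 g \<in> conformal_dual sM DM" if g: "g \<in> conformal_dual sN DN" for g
  proof -
    have gadd: "\<And>x y. g (x + y) = g x + g y" and gsc: "\<And>c x. g (sN c x) = smult c (g x)"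
      and gD: "\<And>x. g (DN x) = [:0, 1:] * g x"
      using g unfolding conformal_dual_def lin_map_def by auto
    show ?thesis unfolding conformal_dual_def dual_morphism_def lin_map_def
      by (simp add: d1add d1scale d1D gadd gsc gD)
  qed
  have part1: "inj_on (dual_morphism d2) (conformal_dual sP DP)"
  proof (rule inj_onI)
    fix f f' assume eq: "dual_morphism d2 f = dual_morphism d2 f'"
    show "f = f'"
    proof
      fix x
      obtain n where n: "x = d2 n" using exact_P by (metis surjD)
      from fun_cong[OF eq, of n] show "f x = f' x" unfolding n dual_morphism_def by simp
    qed
  qed
  have part2: "dual_morphism d2 ` conformal_dual sP DP \<subseteq> conformal_dual sN DN"
    using dual2 by blast
  have part3: "{g \<in> conformal_dual sN DN. dual_morphism d1 g = (\<lambda>_. 0)} = dual_morphism d2 ` conformal_dual sP DP"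
  proof
    show "dual_morphism d2 ` conformal_dual sP DP \<subseteq> {g \<in> conformal_dual sN DN. dual_morphism d1 g = (\<lambda>_. 0)}"
    proof clarify
      fix f assume f: "f \<in> conformal_dual sP DP"
      have fadd: "\<forall>x y. f (x + y) = f x + f y" using f unfolding conformal_dual_def lin_map_def by auto
      have "dual_morphism d1 (dual_morphism d2 f) = (\<lambda>_. 0)"
        unfolding dual_morphism_def d2d1 add0[OF fadd] by simp
      then show "dual_morphism d2 f \<in> conformal_dual sN DN \<and> dual_morphism d1 (dual_morphism d2 f) = (\<lambda>_. 0)"
        using dual2[OF f] by simp
    qed
  next
    show "{g \<in> conformal_dual sN DN. dual_morphism d1 g = (\<lambda>_. 0)} \<subseteq> dual_morphism d2 ` conformal_dual sP DP"
    proof clarify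
      fix g assume g: "g \<in> conformal_dual sN DN" and g0: "dual_morphism d1 g = (\<lambda>_. 0)"
      have gadd: "\<forall>x y. g (x + y) = g x + g y" and gsc: "\<And>c x. g (sN c x) = smult c (g x)"
        and gD: "\<And>x. g (DN x) = [:0, 1:] * g x"
        using g unfolding conformal_dual_def lin_map_def by auto
      have gd1: "g (d1 m) = 0" for m using fun_cong[OF g0, of m] unfolding dual_morphism_def by simp
      define f where "f p = - g (SOME n. d2 n = p)" for p
      have fwd: "f (d2 n) = - g n" for n
      proof -
        have ex: "\<exists>n'. d2 n' = d2 n" by blast
        define n' where "n' = (SOME n'. d2 n' = d2 n)"
        have "d2 n' = d2 n" unfolding n'_def by (rule someI_ex[OF ex])
        then have "d2 (n' - n) = 0" using addsub[of d2] d2add by simp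
        then have "n' - n \<in> range d1" using exact_N by simp
        then have "g (n' - n) = 0" using gd1 by auto
        then have "g n' = g n" using addsub[OF gadd] by simp
        then show ?thesis unfolding f_def n'_def[symmetric] by simp
      qed
      have srj: "\<exists>n. p = d2 n" for p using exact_P by (metis surjD)
      have "f \<in> conformal_dual sP DP"
        unfolding conformal_dual_def lin_map_def
      proof (intro CollectI conjI allI)
        fix x y
        obtain n m where "x = d2 n" "y = d2 m" using srj by metis
        then show "f (x + y) = f x + f y"
          using gadd by (simp add: d2add[symmetric] fwd)
      next
        fix c x
        obtain n where "x = d2 n" using srj by metis
        then show "f (sP c x) = smult c (f x)"
          by (simp add: d2scale[symmetric] fwd gsc)
      next
        fix x
        obtain n where "x = d2 n" using srj by metis
        then show "f (DP x) = [:0, 1:] * f x"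
          by (simp add: d2D[symmetric] fwd gD)
      qed
      moreover have "g = dual_morphism d2 f"
        unfolding dual_morphism_def fwd by simp
      ultimately show "g \<in> dual_morphism d2 ` conformal_dual sP DP" by blast
    qed
  qed
  have part4: "dual_morphism d1 ` conformal_dual sN DN = conformal_dual sM DM"
  proof
    show "dual_morphism d1 ` conformal_dual sN DN \<subseteq> conformal_dual sM DM" using dual1 by blast
  next
    show "conformal_dual sM DM \<subseteq> dual_morphism d1 ` conformal_dual sN DN"
    proof
      fix f assume f: "f \<in> conformal_dual sM DM"
      have fadd: "\<And>x y. f (x + y) = f x + f y" and fsc: "\<And>c x. f (sM c x) = smult c (f x)"
        and fD: "\<And>x. f (DM x) = [:0, 1:] * f x"
        using f unfolding conformal_dual_def lin_map_def by auto
      interpret NS: cpdS sN DN "range d1"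
      proof
        show "0 \<in> range d1" using d10[symmetric] by (rule range_eqI)
      next
        fix x y assume "x \<in> range d1" "y \<in> range d1"
        then obtain m m' where "x = d1 m" "y = d1 m'" by blast
        then show "x + y \<in> range d1" by (simp add: d1add[symmetric])
      next
        fix x c assume "x \<in> range d1"
        then obtain m where "x = d1 m" by blast
        then show "sN c x \<in> range d1" by (simp add: d1scale[symmetric])
      next
        fix x assume "x \<in> range d1"
        then obtain m where "x = d1 m" by blast
        then show "DN x \<in> range d1" by (simp add: d1D[symmetric])
      next
        fix p y assume "p \<noteq> 0" "poly_act sN DN p y \<in> range d1"
        then show "y \<in> range d1" using coker1 unfolding quot_torsion_free_def by blast
      qed
      obtain G where G: "finite G" "\<forall>y. \<exists>p. y - (\<Sum>g\<in>G. poly_act sN DN (p g) g) \<in> range d1"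
        using coker1 unfolding quot_fin_gen_def by blast
      have "NS.gen G (\<lambda>g. g)" unfolding NS.gen_def using G(2) by simp
      then obtain J b where J: "finite J" "NS.gen J b" "NS.indep J (b :: 'n \<Rightarrow> 'n)"
        using NS.basis_exists[OF G(1) refl] by blast
      define \<phi> where "\<phi> x = - f (inv d1 x)" for x
      have phid1: "\<phi> (d1 m) = - f m" for m unfolding \<phi>_def using exact_M by simp
      obtain \<psi> where psi: "lin_map sN smult \<psi>" "\<forall>x. \<psi> (DN x) = [:0, 1:] * \<psi> x" "\<forall>x\<in>range d1. \<psi> x = \<phi> x"
      proof (atomize_elim, rule NS.extend[OF J(2) J(3)])
        fix x y assume "x \<in> range d1" "y \<in> range d1"
        then obtain m m' where "x = d1 m" "y = d1 m'" by blast
        then show "\<phi> (x + y) = \<phi> x + \<phi> y" by (simp add: d1add[symmetric] phid1 fadd)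
      next
        fix c x assume "x \<in> range d1"
        then obtain m where "x = d1 m" by blast
        then show "\<phi> (sN c x) = smult c (\<phi> x)" by (simp add: d1scale[symmetric] phid1 fsc)
      next
        fix x assume "x \<in> range d1"
        then obtain m where "x = d1 m" by blast
        then show "\<phi> (DN x) = [:0, 1:] * \<phi> x" by (simp add: d1D[symmetric] phid1 fD)
      qed
      have "\<psi> \<in> conformal_dual sN DN" unfolding conformal_dual_def using psi by simp
      moreover have "f = dual_morphism d1 \<psi>"
        unfolding dual_morphism_def using psi(3) phid1 by simp
      ultimately show "f \<in> dual_morphism d1 ` conformal_dual sN DN" by blast
    qed
  qed
  show ?thesis using part1 part2 part3 part4 by blast
qed

end
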